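(* For every positive integer $n$, $\mathrm{ex}(n,K_3,T_1)=\mathrm{ex}(n,K_3,P_4)=\mathcal{N}(K_3,D(3,n))=\lfloor n/3\rfloor$.
   Context: $T_1$ (the paw) is a triangle together with one further vertex joined to exactly one vertex of the triangle; $P_4$ is the path on $4$ vertices. $D(3,n)$ is the graph on $n$ vertices consisting of $\lfloor n/3\rfloor$ vertex-disjoint triangles and a clique on the remaining vertices. For graphs $H,G$, $\mathcal{N}(H,G)$ is the number of subgraphs of $G$ isomorphic to $H$, and $\mathrm{ex}(n,H,F)$ is the maximum of $\mathcal{N}(H,G)$ over $F$-free graphs $G$ on $n$ vertices. *)

theory Defs
  imports Main
begin

type_synonym 'a graph = "'a set \<times> 'a set set"

definition simple_graph :: "'a graph \<Rightarrow> bool" where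
  "simple_graph G \<longleftrightarrow> finite (fst G) \<and> (\<forall>e \<in> snd G. e \<subseteq> fst G \<and> card e = 2)"

definition graph_iso :: "'a graph \<Rightarrow> 'b graph \<Rightarrow> bool" where
  "graph_iso G H \<longleftrightarrow> (\<exists>f. bij_betw f (fst G) (fst H) \<and> (\<lambda>e. f ` e) ` snd G = snd H)"

definition subgraphs :: "'a graph \<Rightarrow> 'a graph set" where
  "subgraphs G = {(V', E'). V' \<subseteq> fst G \<and> E' \<subseteq> snd G \<and> (\<forall>e \<in> E'. e \<subseteq> V')}"

definition count_copies :: "'b graph \<Rightarrow> 'a graph \<Rightarrow> nat" where
  "count_copies H G = card {S \<in> subgraphs G. graph_iso S H}"

text \<open>ex(n,H,F): maximum of N(H,G) over F-free graphs G on n vertices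
  (vertex set taken to be {0..<n}, without loss of generality).\<close>
definition gen_ex :: "nat \<Rightarrow> 'b graph \<Rightarrow> 'c graph \<Rightarrow> nat" where
  "gen_ex n H F = Max {count_copies H G | G :: nat graph.
      simple_graph G \<and> fst G = {0..<n} \<and> count_copies F G = 0}"

definition K3 :: "nat graph" where
  "K3 = ({0,1,2}, {{0,1},{1,2},{0,2}})"

definition P4 :: "nat graph" where
  "P4 = ({0,1,2,3}, {{0,1},{1,2},{2,3}})"

definition T1 :: "nat graph" where
  "T1 = ({0,1,2,3}, {{0,1},{1,2},{0,2},{2,3}})"

text \<open>D(3,n): vertices 0..n-1; blocks {3i,3i+1,3i+2} for i < n div 3 are triangles and
  the remaining (at most 2) vertices form a clique; i.e. u,v adjacent iff u div 3 = v div 3.\<close>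
definition D3 :: "nat \<Rightarrow> nat graph" where
  "D3 n = ({0..<n}, {{u, v} | u v. u \<noteq> v \<and> u < n \<and> v < n \<and> u div 3 = v div 3})"

end

theory Submission
  imports Defs
begin

definition tri :: "'a set set \<Rightarrow> 'a \<Rightarrow> 'a \<Rightarrow> 'a \<Rightarrow> bool" where
  "tri E a b c \<longleftrightarrow> a \<noteq> b \<and> b \<noteq> c \<and> a \<noteq> c \<and> {a,b} \<in> E \<and> {b,c} \<in> E \<and> {a,c} \<in> E"

lemma tri_rot1: "tri E a b c \<Longrightarrow> tri E b a c"
  unfolding tri_def by (auto simp: insert_commute)

lemma tri_rot2: "tri E a b c \<Longrightarrow> tri E c a b"
  unfolding tri_def by (auto simp: insert_commute)

lemma fin_sub:
  assumes "simple_graph G" shows "finite (subgraphs G)"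
proof -
  have f: "finite (fst G)" using assms by (simp add: simple_graph_def)
  have "snd G \<subseteq> Pow (fst G)" using assms by (auto simp: simple_graph_def)
  hence f2: "finite (snd G)" using f by (meson finite_Pow_iff finite_subset)
  have "subgraphs G \<subseteq> Pow (fst G) \<times> Pow (snd G)" by (auto simp: subgraphs_def)
  thus ?thesis using f f2 by (meson finite_Pow_iff finite_SigmaI finite_subset)
qed

lemma copies_pos:
  assumes "simple_graph G" "S \<in> subgraphs G" "graph_iso S H"
  shows "count_copies H G > 0"
proof -
  have "finite {S \<in> subgraphs G. graph_iso S H}" using fin_sub[OF assms(1)] by simp
  moreover have "S \<in> {S \<in> subgraphs G. graph_iso S H}" using assms by simp
  ultimately show ?thesis unfolding count_copies_def by (metis card_gt_0_iff empty_iff)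
qed

lemma iso_I:
  assumes "bij_betw g A V" "\<forall>e\<in>E. e \<subseteq> A"
  shows "graph_iso (V, (\<lambda>e. g`e)`E) (A,E)"
proof -
  let ?f = "inv_into A g"
  have b: "bij_betw ?f V A" using assms(1) by (rule bij_betw_inv_into)
  have i: "inj_on g A" using assms(1) by (simp add: bij_betw_def)
  have c: "\<And>e. e \<in> E \<Longrightarrow> ?f ` g ` e = e" using assms(2) i by (simp add: inv_into_image_cancel)
  have "(\<lambda>e. ?f`e) ` (\<lambda>e. g`e) ` E = (\<lambda>e. ?f ` g ` e) ` E" by (simp only: image_image)
  also have "\<dots> = (\<lambda>e. e) ` E" by (rule image_cong) (simp_all add: c)
  finally have "(\<lambda>e. ?f`e) ` (\<lambda>e. g`e) ` E = E" by simp
  thus ?thesis unfolding graph_iso_def using b by auto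
qed

lemma iso_D:
  assumes "graph_iso (V,E) (A,F)" "\<forall>e\<in>E. e \<subseteq> V"
  shows "\<exists>g. bij_betw g A V \<and> E = (\<lambda>e. g`e)`F"
proof -
  obtain f where f: "bij_betw f V A" "(\<lambda>e. f`e)`E = F" using assms(1) by (auto simp: graph_iso_def)
  let ?g = "inv_into V f"
  have b: "bij_betw ?g A V" using f(1) by (rule bij_betw_inv_into)
  have i: "inj_on f V" using f(1) by (simp add: bij_betw_def)
  have "(\<lambda>e. ?g`e) ` F = (\<lambda>e. ?g`e) ` (\<lambda>e. f`e)`E" using f(2) by simp
  also have "\<dots> = (\<lambda>e. ?g ` f ` e) ` E" by (simp only: image_image)
  also have "\<dots> = (\<lambda>e. e) ` E" by (rule image_cong) (use assms(2) i in \<open>simp_all add: inv_into_image_cancel\<close>)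
  also have "\<dots> = E" by simp
  finally show ?thesis using b by metis
qed


lemma K3_copy:
  assumes "S \<in> subgraphs G" "graph_iso S K3"
  shows "\<exists>a b c. S = ({a,b,c},{{a,b},{b,c},{a,c}}) \<and> tri (snd G) a b c"
proof -
  obtain V E where S: "S = (V,E)" by (cases S)
  have sub: "V \<subseteq> fst G" "E \<subseteq> snd G" "\<forall>e\<in>E. e \<subseteq> V" using assms(1) S by (auto simp: subgraphs_def)
  obtain g :: "nat \<Rightarrow> _" where g: "bij_betw g {0,1,2} V" "E = (\<lambda>e. g`e)`{{0,1},{1,2},{0,2}}"
    using iso_D[of V E "{0::nat,1,2}" "{{0,1},{1,2},{0,2}}"] assms(2) S sub(3) by (auto simp: K3_def)
  have V: "V = {g 0, g 1, g 2}" using g(1) by (auto simp: bij_betw_def)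
  have inj: "inj_on g {0,1,2}" using g(1) by (simp add: bij_betw_def)
  have d: "g 0 \<noteq> g 1" "g 1 \<noteq> g 2" "g 0 \<noteq> g 2" using inj by (auto dest: inj_onD)
  have E: "E = {{g 0, g 1},{g 1, g 2},{g 0, g 2}}" using g(2) by simp
  have "tri (snd G) (g 0) (g 1) (g 2)" using d E sub(2) by (auto simp: tri_def)
  thus ?thesis using S V E by blast
qed

lemma K3_copy_I:
  assumes "tri (snd G) a b c" "simple_graph G"
  shows "({a,b,c},{{a,b},{b,c},{a,c}}) \<in> subgraphs G \<and> graph_iso ({a,b,c},{{a,b},{b,c},{a,c}}) K3"
proof
  have "{a,b} \<subseteq> fst G" "{b,c} \<subseteq> fst G" using assms by (auto simp: tri_def simple_graph_def)
  thus "({a,b,c},{{a,b},{b,c},{a,c}}) \<in> subgraphs G" using assms(1) by (auto simp: subgraphs_def tri_def)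
  define g where "g = (\<lambda>i::nat. if i = 0 then a else if i = 1 then b else c)"
  have "bij_betw g {0,1,2} {a,b,c}" using assms(1)
    by (auto simp: bij_betw_def inj_on_def g_def tri_def)
  from iso_I[OF this, of "{{0,1},{1,2},{0,2}}"]
  show "graph_iso ({a,b,c},{{a,b},{b,c},{a,c}}) K3" by (simp add: K3_def g_def insert_commute)
qed

lemma pendant:
  assumes G: "simple_graph G" and t: "tri (snd G) a b c" and d: "d \<notin> {a,b,c}" and e: "{a,d} \<in> snd G"
  shows "count_copies T1 G > 0 \<and> count_copies P4 G > 0"
proof -
  have inV: "a \<in> fst G" "b \<in> fst G" "c \<in> fst G" "d \<in> fst G"
    using G t e by (auto simp: tri_def simple_graph_def)
  define g where "g = (\<lambda>i::nat. if i = 0 then b else if i = 1 then c else if i = 2 then a else d)"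
  have bij: "bij_betw g {0,1,2,3} {a,b,c,d}" using t d
    by (auto simp: bij_betw_def inj_on_def g_def tri_def)
  have i1: "graph_iso ({a,b,c,d}, {{b,c},{c,a},{b,a},{a,d}}) T1"
    using iso_I[OF bij, of "{{0,1},{1,2},{0,2},{2,3}}"] by (simp add: T1_def g_def insert_commute)
  have i2: "graph_iso ({a,b,c,d}, {{b,c},{c,a},{a,d}}) P4"
    using iso_I[OF bij, of "{{0,1},{1,2},{2,3}}"] by (simp add: P4_def g_def insert_commute)
  have s1: "({a,b,c,d}, {{b,c},{c,a},{b,a},{a,d}}) \<in> subgraphs G"
    using inV t e by (auto simp: subgraphs_def tri_def insert_commute)
  have s2: "({a,b,c,d}, {{b,c},{c,a},{a,d}}) \<in> subgraphs G"
    using inV t e by (auto simp: subgraphs_def tri_def insert_commute)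
  show ?thesis using copies_pos[OF G s1 i1] copies_pos[OF G s2 i2] by simp
qed


lemma tri_edge: "tri E a b c \<Longrightarrow> x \<in> {a,b,c} \<Longrightarrow> y \<in> {a,b,c} \<Longrightarrow> x \<noteq> y \<Longrightarrow> {x,y} \<in> E"
  unfolding tri_def by (auto simp: insert_commute)

lemma K3_edges: "a \<noteq> b \<Longrightarrow> b \<noteq> c \<Longrightarrow> a \<noteq> c \<Longrightarrow>
  {{a,b},{b,c},{a,c}} = {e. \<exists>x y. x \<in> {a,b,c} \<and> y \<in> {a,b,c} \<and> x \<noteq> y \<and> e = {x,y}}"
  by (auto simp: insert_commute)

lemma tri_card: "tri E a b c \<Longrightarrow> card {a,b,c} = 3"
  unfolding tri_def by auto

lemma disj:
  assumes G: "simple_graph G" and free: "count_copies T1 G = 0 \<or> count_copies P4 G = 0"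
    and S1: "S1 \<in> subgraphs G" "graph_iso S1 K3" and S2: "S2 \<in> subgraphs G" "graph_iso S2 K3"
    and int: "fst S1 \<inter> fst S2 \<noteq> {}"
  shows "S1 = S2"
proof -
  obtain a b c where A: "S1 = ({a,b,c},{{a,b},{b,c},{a,c}})" "tri (snd G) a b c"
    using K3_copy[OF S1] by blast
  obtain a' b' c' where B: "S2 = ({a',b',c'},{{a',b'},{b',c'},{a',c'}})" "tri (snd G) a' b' c'"
    using K3_copy[OF S2] by blast
  show ?thesis
  proof (cases "{a,b,c} = {a',b',c'}")
    case True
    have "{{a,b},{b,c},{a,c}} = {{a',b'},{b',c'},{a',c'}}"
      using K3_edges[of a b c] K3_edges[of a' b' c'] A(2) B(2) True by (simp add: tri_def)
    thus ?thesis using A B True by simp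
  next
    case False
    have "\<not> {a',b',c'} \<subseteq> {a,b,c}"
    proof
      assume "{a',b',c'} \<subseteq> {a,b,c}"
      hence "{a',b',c'} = {a,b,c}" using tri_card[OF A(2)] tri_card[OF B(2)]
        by (metis card_subset_eq finite.emptyI finite.insertI)
      thus False using False by simp
    qed
    then obtain y where y: "y \<in> {a',b',c'}" "y \<notin> {a,b,c}" by blast
    obtain x where x: "x \<in> {a,b,c}" "x \<in> {a',b',c'}" using int A B by auto
    have xy: "{x,y} \<in> snd G" using tri_edge[OF B(2) x(2) y(1)] x y by auto
    have "count_copies T1 G > 0 \<and> count_copies P4 G > 0"
    proof -
      consider "x = a" | "x = b" | "x = c" using x by auto
      thus ?thesis
      proof cases
        case 1 thus ?thesis using pendant[OF G A(2) y(2)] xy by simp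
      next
        case 2 thus ?thesis using pendant[OF G tri_rot1[OF A(2)], of y] xy y by auto
      next
        case 3 thus ?thesis using pendant[OF G tri_rot2[OF A(2)], of y] xy y by auto
      qed
    qed
    thus ?thesis using free by simp
  qed
qed

lemma upper:
  assumes G: "simple_graph G" and V: "fst G = {0..<n}" and free: "count_copies T1 G = 0 \<or> count_copies P4 G = 0"
  shows "count_copies K3 G \<le> n div 3"
proof -
  define C where "C = {S \<in> subgraphs G. graph_iso S K3}"
  have fC: "finite C" using fin_sub[OF G] by (simp add: C_def)
  have c3: "\<And>S. S \<in> C \<Longrightarrow> card (fst S) = 3 \<and> fst S \<subseteq> {0..<n}"
  proof -
    fix S assume "S \<in> C"
    then obtain a b c where A: "S = ({a,b,c},{{a,b},{b,c},{a,c}})" "tri (snd G) a b c"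
      using K3_copy[of S G] by (auto simp: C_def)
    have "fst S \<subseteq> fst G" using \<open>S \<in> C\<close> by (auto simp: C_def subgraphs_def)
    thus "card (fst S) = 3 \<and> fst S \<subseteq> {0..<n}" using tri_card[OF A(2)] A(1) V by simp
  qed
  have dj: "\<And>S1 S2. S1 \<in> C \<Longrightarrow> S2 \<in> C \<Longrightarrow> S1 \<noteq> S2 \<Longrightarrow> fst S1 \<inter> fst S2 = {}"
  proof (rule ccontr)
    fix S1 S2 assume h: "S1 \<in> C" "S2 \<in> C" "S1 \<noteq> S2" "fst S1 \<inter> fst S2 \<noteq> {}"
    have "S1 = S2" using disj[OF G free _ _ _ _ h(4)] h(1,2) by (simp add: C_def)
    thus False using h(3) by simp
  qed
  have inj: "inj_on fst C"
  proof (rule inj_onI)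
    fix S1 S2 assume h: "S1 \<in> C" "S2 \<in> C" "fst S1 = fst S2"
    have "fst S1 \<noteq> {}" using c3[OF h(1)] by auto
    thus "S1 = S2" using dj[OF h(1,2)] h(3) by auto
  qed
  have pw: "pairwise disjnt (fst ` C)"
  proof (rule pairwiseI)
    fix X Y assume "X \<in> fst ` C" "Y \<in> fst ` C" "X \<noteq> Y"
    then obtain S1 S2 where "S1 \<in> C" "S2 \<in> C" "X = fst S1" "Y = fst S2" by blast
    moreover have "S1 \<noteq> S2" using calculation \<open>X \<noteq> Y\<close> by auto
    ultimately show "disjnt X Y" using dj[of S1 S2] unfolding disjnt_def by simp
  qed
  have "card (\<Union> (fst ` C)) = sum card (fst ` C)"
    by (rule card_Union_disjoint[OF pw]) (use c3 in \<open>auto intro: card_ge_0_finite\<close>)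
  also have "\<dots> = sum (\<lambda>_. 3) (fst ` C)" by (rule sum.cong) (use c3 in auto)
  also have "\<dots> = 3 * card C" using card_image[OF inj] by simp
  finally have eq: "card (\<Union> (fst ` C)) = 3 * card C" .
  have "\<Union> (fst ` C) \<subseteq> {0..<n}" using c3 by auto
  hence "card (\<Union> (fst ` C)) \<le> n" by (metis card_atLeastLessThan card_mono finite_atLeastLessThan diff_zero)
  hence "3 * card C \<le> n" using eq by simp
  thus ?thesis unfolding count_copies_def C_def[symmetric] by linarith
qed


lemma four_same:
  fixes w x y z :: nat
  assumes "w div 3 = x div 3" "x div 3 = y div 3" "y div 3 = z div 3"
    "w \<noteq> x" "w \<noteq> y" "w \<noteq> z" "x \<noteq> y" "x \<noteq> z" "y \<noteq> z"
  shows False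
proof -
  have m: "\<And>v::nat. v = 3 * (v div 3) + v mod 3" by simp
  have r: "\<And>v::nat. v mod 3 \<in> {0,1,2}" by auto
  have d: "w mod 3 \<noteq> x mod 3" "w mod 3 \<noteq> y mod 3" "w mod 3 \<noteq> z mod 3"
    "x mod 3 \<noteq> y mod 3" "x mod 3 \<noteq> z mod 3" "y mod 3 \<noteq> z mod 3"
    using assms m by metis+
  show False using d r[of w] r[of x] r[of y] r[of z] by auto
qed

lemma simple_D3: "simple_graph (D3 n)"
  unfolding simple_graph_def D3_def by auto

lemma D3_edge: "{x,y} \<in> snd (D3 n) \<Longrightarrow> x div 3 = y div 3"
  unfolding D3_def by (auto simp: doubleton_eq_iff)

lemma D3_edge_I: "u \<noteq> v \<Longrightarrow> u < n \<Longrightarrow> v < n \<Longrightarrow> u div 3 = v div 3 \<Longrightarrow> {u,v} \<in> snd (D3 n)"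
  unfolding D3_def by auto

lemma D3_free_gen:
  assumes S: "S \<in> subgraphs (D3 n)" and iso: "graph_iso S ({0::nat,1,2,3}, E)"
    and e: "{0,1} \<in> E" "{1,2} \<in> E" "{2,3} \<in> E"
  shows False
proof -
  obtain V F where SV: "S = (V,F)" by (cases S)
  have sub: "F \<subseteq> snd (D3 n)" "\<forall>e\<in>F. e \<subseteq> V" using S SV by (auto simp: subgraphs_def)
  obtain g where g: "bij_betw g {0::nat,1,2,3} V" "F = (\<lambda>e. g`e)`E"
    using iso_D[of V F "{0::nat,1,2,3}" E] iso SV sub(2) by auto
  have inj: "inj_on g {0,1,2,3}" using g(1) by (simp add: bij_betw_def)
  have d: "g 0 \<noteq> g 1" "g 0 \<noteq> g 2" "g 0 \<noteq> g 3" "g 1 \<noteq> g 2" "g 1 \<noteq> g 3" "g 2 \<noteq> g 3"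
    using inj by (auto dest: inj_onD)
  have "g`{0,1} \<in> F" "g`{1,2} \<in> F" "g`{2,3} \<in> F"
    using g(2) e by blast+
  hence "{g 0, g 1} \<in> F" "{g 1, g 2} \<in> F" "{g 2, g 3} \<in> F" by simp_all
  hence "g 0 div 3 = g 1 div 3" "g 1 div 3 = g 2 div 3" "g 2 div 3 = g 3 div 3"
    using sub(1) D3_edge by blast+
  thus False using four_same d by metis
qed

lemma D3_free: "count_copies T1 (D3 n) = 0" "count_copies P4 (D3 n) = 0"
proof -
  have "{S \<in> subgraphs (D3 n). graph_iso S T1} = {}"
    using D3_free_gen[of _ n "{{0,1},{1,2},{0,2},{2,3}}"] by (auto simp: T1_def)
  thus "count_copies T1 (D3 n) = 0" unfolding count_copies_def by (metis card.empty)
  have "{S \<in> subgraphs (D3 n). graph_iso S P4} = {}"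
    using D3_free_gen[of _ n "{{0,1},{1,2},{2,3}}"] by (auto simp: P4_def)
  thus "count_copies P4 (D3 n) = 0" unfolding count_copies_def by (metis card.empty)
qed

lemma lower: "n div 3 \<le> count_copies K3 (D3 n)"
proof -
  define h where "h = (\<lambda>i::nat. ({3*i,3*i+1,3*i+2}, {{3*i,3*i+1},{3*i+1,3*i+2},{3*i,3*i+2}}))"
  have inj: "inj_on h {..<n div 3}"
  proof (rule inj_onI)
    fix i j assume "h i = h j"
    hence "3*i \<in> {3*j,3*j+1,3*j+2}" "3*j \<in> {3*i,3*i+1,3*i+2}" unfolding h_def by (metis fst_conv insertI1)+
    thus "i = j" by auto
  qed
  have into: "h ` {..<n div 3} \<subseteq> {S \<in> subgraphs (D3 n). graph_iso S K3}"
  proof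
    fix S assume "S \<in> h ` {..<n div 3}"
    then obtain i where i: "i < n div 3" "S = h i" by auto
    have lt: "3*i+2 < n" using i(1) by linarith
    have t: "tri (snd (D3 n)) (3*i) (3*i+1) (3*i+2)"
    proof -
      have "(3*i+1) div 3 = i" "(3*i+2) div 3 = i" "(3*i) div 3 = i" by simp_all
      thus ?thesis unfolding tri_def using lt by (auto intro!: D3_edge_I)
    qed
    show "S \<in> {S \<in> subgraphs (D3 n). graph_iso S K3}"
      using K3_copy_I[OF t simple_D3] i(2) by (simp add: h_def)
  qed
  have "card {..<n div 3} \<le> card {S \<in> subgraphs (D3 n). graph_iso S K3}"
    by (rule card_inj_on_le[OF inj into]) (simp add: fin_sub[OF simple_D3])
  thus ?thesis by (simp add: count_copies_def)
qed


lemma D3_count: "count_copies K3 (D3 n) = n div 3"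
proof -
  have "fst (D3 n) = {0..<n}" by (simp add: D3_def)
  hence "count_copies K3 (D3 n) \<le> n div 3" using upper[OF simple_D3] D3_free(1)[of n] by blast
  thus ?thesis using lower[of n] by simp
qed

lemma gen_ex_val:
  fixes F :: "nat graph"
  assumes ub: "\<And>G. simple_graph G \<Longrightarrow> fst G = {0..<n} \<Longrightarrow> count_copies F G = 0 \<Longrightarrow> count_copies K3 G \<le> n div 3"
    and fr: "count_copies F (D3 n) = 0"
  shows "gen_ex n K3 F = n div 3"
proof -
  let ?A = "{count_copies K3 G | G :: nat graph. simple_graph G \<and> fst G = {0..<n} \<and> count_copies F G = 0}"
  have le: "\<forall>y\<in>?A. y \<le> n div 3" using ub by blast
  hence fin: "finite ?A" by (meson finite_atMost atMost_iff finite_subset subsetI)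
  have "n div 3 \<in> ?A" using simple_D3[of n] fr D3_count[of n]
    by (metis (mono_tags, lifting) D3_def fst_conv mem_Collect_eq)
  thus ?thesis unfolding gen_ex_def using Max_eqI[OF fin] le by blast
qed

theorem mainTheorem15:
  fixes n :: nat
  assumes "n \<ge> 1"
  shows "gen_ex n K3 T1 = gen_ex n K3 P4 \<and> gen_ex n K3 P4 = count_copies K3 (D3 n)
         \<and> count_copies K3 (D3 n) = n div 3"
proof -
  have "gen_ex n K3 T1 = n div 3"
    by (rule gen_ex_val) (use upper D3_free in auto)
  moreover have "gen_ex n K3 P4 = n div 3"
    by (rule gen_ex_val) (use upper D3_free in auto)
  ultimately show ?thesis using D3_count[of n] by simp
qed

end
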